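(* Let $\mathcal{F}=\{e_j\}_{j=1}^N$ be a unit-norm tight frame of $\mathbb{R}^d$ with $F=[e_1,\dots,e_N]$, and let $\delta>0$. Model the quantization errors as in the White Noise Hypothesis: let $\eta_1,\dots,\eta_N$ be independent random variables, each uniformly distributed on $[-\delta/2,\delta/2)$, and let the reconstruction error be the random vector $\mathrm{Err}:=\frac dN\sum_{j=1}^N\eta_je_j$. Then for every $\varepsilon\in(0,1/2)$, $$\Pr\Bigl(\|\mathrm{Err}\|\le \frac{d\,\delta}{N^{1/2-\varepsilon}}\bigl(\sigma(F)+1\bigr)\Bigr)\ge 1-2N\exp(-2N^{2\varepsilon}).$$
   Context: A finite family $\{e_j\}_{j=1}^N\subset\mathbb{R}^d$ is a unit-norm tight frame if $\|e_j\|=1$ and $\sum_j e_je_j^T=\frac Nd I_d$. The variation of $F=[e_1,\dots,e_N]$ is $\sigma(F):=\min_{p}\sum_{j=1}^{N-1}\|e_{p(j)}-e_{p(j+1)}\|$, the minimum over all permutations $p$ of $\{1,\dots,N\}$. *)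

theory Defs
  imports "HOL-Probability.Probability"
begin

text \<open>Frame vectors are indexed by j = 0..N-1 (the paper uses 1..N).\<close>

definition unit_norm_tight_frame :: "nat \<Rightarrow> (nat \<Rightarrow> real^'d) \<Rightarrow> bool" where
  "unit_norm_tight_frame N e \<longleftrightarrow>
     (\<forall>j<N. norm (e j) = 1) \<and>
     (\<Sum>j<N. (\<chi> i k. e j $ i * e j $ k)) = (real N / real CARD('d)) *\<^sub>R (mat 1 :: real^'d^'d)"

definition frame_variation :: "nat \<Rightarrow> (nat \<Rightarrow> real^'d) \<Rightarrow> real" where
  "frame_variation N e =
     Min {(\<Sum>j<N - 1. norm (e (p j) - e (p (j + 1)))) | p. p permutes {..<N}}"

definition recon_error :: "nat \<Rightarrow> (nat \<Rightarrow> real^'d) \<Rightarrow> (nat \<Rightarrow> real) \<Rightarrow> real^'d" where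
  "recon_error N e \<eta> = (real CARD('d) / real N) *\<^sub>R (\<Sum>j<N. \<eta> j *\<^sub>R e j)"

end

theory Submission
  imports Defs
begin

lemma unif_AE:
  fixes X :: "'w \<Rightarrow> real"
  assumes P: "prob_space M" and X: "X \<in> borel_measurable M"
    and D: "distr M lborel X = uniform_measure lborel {-c..<c}" and c: "c > 0"
  shows "AE x in M. X x \<in> {-c..c}"
proof -
  have Xm: "X \<in> M \<rightarrow>\<^sub>M lborel" using X by simp
  have "AE x in distr M lborel X. x \<in> {-c..c}" unfolding D
    by (rule AE_uniform_measureI) auto
  thus ?thesis by (subst (asm) AE_distr_iff[OF Xm]) auto
qed

lemma unif_exp:
  fixes X :: "'w \<Rightarrow> real"
  assumes P: "prob_space M" and X: "X \<in> borel_measurable M"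
    and D: "distr M lborel X = uniform_measure lborel {-c..<c}" and c: "c > 0"
  shows "prob_space.expectation M X = 0"
proof -
  interpret prob_space M by fact
  have Xm: "X \<in> M \<rightarrow>\<^sub>M lborel" using X by simp
  have meq: "emeasure lborel ({-c..<c} \<inter> {..t}) = emeasure lborel ({-c..c} \<inter> {..t})" for t :: real
  proof -
    consider "t < -c" | "-c \<le> t" "t < c" | "c \<le> t" by linarith
    thus ?thesis
    proof cases
      case 1
      hence "{-c..<c} \<inter> {..t} = {}" "{-c..c} \<inter> {..t} = {}" by auto
      thus ?thesis by simp
    next
      case 2
      hence "{-c..<c} \<inter> {..t} = {-c..t}" "{-c..c} \<inter> {..t} = {-c..t}" by auto
      thus ?thesis by (simp only:)
    next
      case 3
      hence "{-c..<c} \<inter> {..t} = {-c..<c}" "{-c..c} \<inter> {..t} = {-c..c}" by auto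
      thus ?thesis using c by simp
    qed
  qed
  have "distributed M lborel X (\<lambda>x. indicator {-c..c} x / measure lborel {-c..c})"
  proof (rule uniform_distrI_borel[where r = "2*c"])
    show "emeasure lborel {-c..c} = ennreal (2*c)" using c by simp
    fix t :: real
    have "emeasure M {x\<in>space M. X x \<le> t} = emeasure (distr M lborel X) {..t}"
      using Xm by (subst emeasure_distr) (auto intro!: arg_cong2[where f=emeasure])
    also have "\<dots> = emeasure lborel ({-c..<c} \<inter> {..t}) / emeasure lborel {-c..<c}"
      using D by simp
    also have "\<dots> = emeasure lborel ({-c..c} \<inter> {..t}) / (2*c)"
      using c meq by simp
    finally show "emeasure M {x\<in>space M. X x \<le> t} = emeasure lborel ({-c..c} \<inter> {..t}) / (2*c)" .
  qed (use X c in auto)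
  from uniform_distributed_expectation[OF this] show ?thesis by simp
qed

lemma abel_sum:
  fixes a :: "nat \<Rightarrow> real" and v :: "nat \<Rightarrow> 'a::real_vector"
  shows "(\<Sum>j<Suc n. a j *\<^sub>R v j) = (\<Sum>k<n. (\<Sum>j\<le>k. a j) *\<^sub>R (v k - v (Suc k))) + (\<Sum>j\<le>n. a j) *\<^sub>R v n"
proof (induction n)
  case 0 thus ?case by simp
next
  case (Suc n)
  have "(\<Sum>j<Suc (Suc n). a j *\<^sub>R v j) = (\<Sum>j<Suc n. a j *\<^sub>R v j) + a (Suc n) *\<^sub>R v (Suc n)" by simp
  also have "\<dots> = (\<Sum>k<n. (\<Sum>j\<le>k. a j) *\<^sub>R (v k - v (Suc k))) + (\<Sum>j\<le>n. a j) *\<^sub>R v n + a (Suc n) *\<^sub>R v (Suc n)"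
    using Suc by simp
  also have "\<dots> = (\<Sum>k<Suc n. (\<Sum>j\<le>k. a j) *\<^sub>R (v k - v (Suc k))) + (\<Sum>j\<le>Suc n. a j) *\<^sub>R v (Suc n)"
    by (simp add: algebra_simps)
  finally show ?case .
qed

lemma abel_bound:
  fixes a :: "nat \<Rightarrow> real" and v :: "nat \<Rightarrow> 'a::real_normed_vector"
  assumes S: "\<And>k. k \<le> n \<Longrightarrow> \<bar>\<Sum>j\<le>k. a j\<bar> \<le> t" and v: "norm (v n) \<le> 1"
  shows "norm (\<Sum>j<Suc n. a j *\<^sub>R v j) \<le> t * ((\<Sum>k<n. norm (v k - v (Suc k))) + 1)"
proof -
  have t0: "0 \<le> t" using S[of 0] by simp
  have "norm (\<Sum>j<Suc n. a j *\<^sub>R v j) \<le> norm (\<Sum>k<n. (\<Sum>j\<le>k. a j) *\<^sub>R (v k - v (Suc k))) + norm ((\<Sum>j\<le>n. a j) *\<^sub>R v n)"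
    unfolding abel_sum by (rule norm_triangle_ineq)
  also have "norm (\<Sum>k<n. (\<Sum>j\<le>k. a j) *\<^sub>R (v k - v (Suc k))) \<le> (\<Sum>k<n. t * norm (v k - v (Suc k)))"
  proof (rule order.trans[OF norm_sum sum_mono])
    fix k assume "k \<in> {..<n}"
    hence "\<bar>\<Sum>j\<le>k. a j\<bar> \<le> t" using S by simp
    thus "norm ((\<Sum>j\<le>k. a j) *\<^sub>R (v k - v (Suc k))) \<le> t * norm (v k - v (Suc k))"
      by (simp add: mult_right_mono)
  qed
  also have "norm ((\<Sum>j\<le>n. a j) *\<^sub>R v n) \<le> t * 1"
    using S[of n] v t0 mult_mono[of "\<bar>\<Sum>j\<le>n. a j\<bar>" t "norm (v n)" 1] by simp
  finally show ?thesis by (simp add: sum_distrib_left algebra_simps)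
qed

theorem theorem3p1:
  fixes N :: nat and e :: "nat \<Rightarrow> real^'d" and \<delta> \<epsilon> :: real
    and M :: "'w measure" and \<eta> :: "nat \<Rightarrow> 'w \<Rightarrow> real"
  assumes frame: "unit_norm_tight_frame N e"
    and delta: "\<delta> > 0"
    and P: "prob_space M"
    and indep: "prob_space.indep_vars M (\<lambda>_. borel) \<eta> {..<N}"
    and unif: "\<And>j. j < N \<Longrightarrow> distr M lborel (\<eta> j) = uniform_measure lborel {-\<delta>/2..<\<delta>/2}"
    and eps: "0 < \<epsilon>" "\<epsilon> < 1/2"
  shows "measure M {\<omega> \<in> space M.
            norm (recon_error N e (\<lambda>j. \<eta> j \<omega>))
              \<le> real CARD('d) * \<delta> / real N powr (1/2 - \<epsilon>) * (frame_variation N e + 1)}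
         \<ge> 1 - 2 * real N * exp (- 2 * real N powr (2 * \<epsilon>))"
proof -
  interpret prob_space M by (rule P)
  have meas: "\<eta> j \<in> borel_measurable M" if "j < N" for j
    using indep that unfolding indep_vars_def by auto
  have unif': "distr M lborel (\<eta> j) = uniform_measure lborel {-(\<delta>/2)..<\<delta>/2}" if "j < N" for j
    using unif[OF that] by simp
  have unitn: "norm (e j) = 1" if "j < N" for j
    using frame that unfolding unit_norm_tight_frame_def by auto
  define B where "B = real CARD('d) * \<delta> / real N powr (1/2 - \<epsilon>) * (frame_variation N e + 1)"
  define G where "G = {\<omega> \<in> space M. norm (recon_error N e (\<lambda>j. \<eta> j \<omega>)) \<le> B}"
  have summ: "(\<lambda>\<omega>. \<Sum>j<N. \<eta> j \<omega> *\<^sub>R e j) \<in> borel_measurable M"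
    by (rule borel_measurable_sum) (use meas in auto)
  have Gm: "G \<in> sets M"
  proof -
    have "(\<lambda>\<omega>. norm (recon_error N e (\<lambda>j. \<eta> j \<omega>))) \<in> borel_measurable M"
      unfolding recon_error_def using summ by measurable
    thus ?thesis unfolding G_def by measurable
  qed
  show ?thesis
  proof (cases "N = 0")
    case True
    have "G = space M" unfolding G_def B_def recon_error_def using True by auto
    thus ?thesis using True prob_space unfolding G_def B_def by simp
  next
    case False
    then obtain n where Nn: "N = Suc n" by (cases N) auto
    define V where "V = {(\<Sum>j<N - 1. norm (e (p j) - e (p (j + 1)))) | p. p permutes {..<N}}"
    have "V = (\<lambda>p. \<Sum>j<N - 1. norm (e (p j) - e (p (j + 1)))) ` {p. p permutes {..<N}}"
      unfolding V_def by auto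
    hence Vfin: "finite V" by (simp add: finite_permutations)
    have "V \<noteq> {}" unfolding V_def using permutes_id by blast
    hence "Min V \<in> V" using Vfin by (rule Min_in[rotated])
    then obtain p where p: "p permutes {..<N}"
      and sig: "frame_variation N e = (\<Sum>j<N - 1. norm (e (p j) - e (p (j + 1))))"
      unfolding V_def frame_variation_def by blast
    have pinj: "inj p" using p by (rule permutes_inj)
    have pN: "p j < N" if "j < N" for j using permutes_in_image[OF p, of j] that by simp
    define t where "t = \<delta> * real N powr (1/2 + \<epsilon>)"
    have t0: "t > 0" unfolding t_def using delta Nn by simp
    define Bad where "Bad k = {\<omega> \<in> space M. t \<le> \<bar>\<Sum>i\<in>p ` {..k}. \<eta> i \<omega>\<bar>}" for k
    have pk: "p ` {..k} \<subseteq> {..<N}" if "k < N" for k using pN that by auto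
    have Badm: "Bad k \<in> sets M" if "k < N" for k
    proof -
      have "(\<lambda>\<omega>. \<Sum>i\<in>p ` {..k}. \<eta> i \<omega>) \<in> borel_measurable M"
        by (rule borel_measurable_sum) (use meas pk[OF that] in auto)
      thus ?thesis unfolding Bad_def by measurable
    qed
    have sub: "space M - (\<Union>k<N. Bad k) \<subseteq> G"
    proof
      fix \<omega> assume w: "\<omega> \<in> space M - (\<Union>k<N. Bad k)"
      have Sk: "\<bar>\<Sum>j\<le>k. \<eta> (p j) \<omega>\<bar> \<le> t" if "k \<le> n" for k
      proof -
        have "(\<Sum>i\<in>p ` {..k}. \<eta> i \<omega>) = (\<Sum>j\<le>k. \<eta> (p j) \<omega>)"
          using pinj by (subst sum.reindex) (auto intro: inj_on_subset)
        moreover have "\<omega> \<notin> Bad k" using w that Nn by auto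
        ultimately show ?thesis using w unfolding Bad_def by auto
      qed
      have "(\<Sum>j<N. \<eta> j \<omega> *\<^sub>R e j) = (\<Sum>j<N. \<eta> (p j) \<omega> *\<^sub>R e (p j))"
        using sum.permute[OF p, of "\<lambda>j. \<eta> j \<omega> *\<^sub>R e j"] by simp
      also have "norm \<dots> \<le> t * ((\<Sum>k<n. norm (e (p k) - e (p (Suc k)))) + 1)"
        unfolding Nn by (rule abel_bound[OF Sk]) (use unitn pN Nn in auto)
      also have "\<dots> = t * (frame_variation N e + 1)" using sig Nn by simp
      finally have nb: "norm (\<Sum>j<N. \<eta> j \<omega> *\<^sub>R e j) \<le> t * (frame_variation N e + 1)" .
      have "norm (recon_error N e (\<lambda>j. \<eta> j \<omega>)) = real CARD('d) / real N * norm (\<Sum>j<N. \<eta> j \<omega> *\<^sub>R e j)"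
        unfolding recon_error_def by simp
      also have "\<dots> \<le> real CARD('d) / real N * (t * (frame_variation N e + 1))"
        by (rule mult_left_mono[OF nb]) simp
      also have "\<dots> = B"
      proof -
        have "real N powr (1/2 - \<epsilon>) * real N powr (1/2 + \<epsilon>) = real N powr ((1/2 - \<epsilon>) + (1/2 + \<epsilon>))"
          by (rule powr_add[symmetric])
        also have "\<dots> = real N" using Nn by simp
        finally have "real N powr (1/2 - \<epsilon>) * real N powr (1/2 + \<epsilon>) = real N" .
        moreover have "real N powr (1/2 - \<epsilon>) > 0" using Nn by simp
        ultimately have "real N powr (1/2 + \<epsilon>) / real N = 1 / real N powr (1/2 - \<epsilon>)"
          using Nn by (simp add: field_simps)
        have "real CARD('d) / real N * (t * (frame_variation N e + 1))
            = real CARD('d) * \<delta> * (real N powr (1/2 + \<epsilon>) / real N) * (frame_variation N e + 1)"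
          unfolding t_def using Nn by (simp add: field_simps)
        also have "\<dots> = B" unfolding B_def \<open>real N powr (1/2 + \<epsilon>) / real N = 1 / real N powr (1/2 - \<epsilon>)\<close>
          by simp
        finally show ?thesis .
      qed
      finally show "\<omega> \<in> G" unfolding G_def using w by auto
    qed
    have Badp: "measure M (Bad k) \<le> 2 * exp (- 2 * real N powr (2 * \<epsilon>))" if k: "k < N" for k
    proof -
      let ?I = "p ` {..k}"
      have cI: "card ?I = Suc k" using pinj by (simp add: card_image inj_on_subset)
      have H: "Hoeffding_ineq M ?I \<eta> (\<lambda>_. -(\<delta>/2)) (\<lambda>_. \<delta>/2)"
        unfolding Hoeffding_ineq_def indep_interval_bounded_random_variables_def
          indep_interval_bounded_random_variables_axioms_def
      proof (intro conjI allI impI)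
        show "prob_space M" by (rule P)
        show "finite ?I" by simp
        show "indep_vars (\<lambda>_. borel) \<eta> ?I" by (rule indep_vars_subset[OF indep pk[OF k]])
        fix i assume "i \<in> ?I"
        hence "i < N" using pk[OF k] by auto
        thus "AE x in M. \<eta> i x \<in> {-(\<delta>/2)..\<delta>/2}"
          using unif_AE[OF P meas[OF \<open>i < N\<close>] unif'[OF \<open>i < N\<close>]] delta by simp
      qed
      have E0: "(\<Sum>i\<in>?I. expectation (\<eta> i)) = 0"
      proof (rule sum.neutral, rule ballI)
        fix i assume "i \<in> ?I"
        hence "i < N" using pk[OF k] by auto
        thus "expectation (\<eta> i) = 0"
          using unif_exp[OF P meas[OF \<open>i < N\<close>] unif'[OF \<open>i < N\<close>]] delta by simp
      qed
      have sq: "(\<Sum>i\<in>?I. (\<delta>/2 - -(\<delta>/2))\<^sup>2) = real (Suc k) * \<delta>\<^sup>2"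
        using cI by simp
      have "measure M (Bad k) = prob {x\<in>space M. t \<le> \<bar>(\<Sum>i\<in>?I. \<eta> i x) - (\<Sum>i\<in>?I. expectation (\<eta> i))\<bar>}"
        unfolding Bad_def E0 by simp
      also have "\<dots> \<le> 2 * exp (- 2 * t\<^sup>2 / (\<Sum>i\<in>?I. (\<delta>/2 - -(\<delta>/2))\<^sup>2))"
        by (rule Hoeffding_ineq.Hoeffding_ineq_abs_ge[OF H]) (use t0 sq delta in auto)
      also have "\<dots> \<le> 2 * exp (- 2 * t\<^sup>2 / (real N * \<delta>\<^sup>2))"
      proof -
        have "t\<^sup>2 / (real N * \<delta>\<^sup>2) \<le> t\<^sup>2 / (real (Suc k) * \<delta>\<^sup>2)"
          using k delta by (intro divide_left_mono mult_right_mono mult_pos_pos) auto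
        thus ?thesis unfolding sq by simp
      qed
      also have "2 * exp (- 2 * t\<^sup>2 / (real N * \<delta>\<^sup>2)) = 2 * exp (- 2 * real N powr (2 * \<epsilon>))"
      proof -
        have a: "(real N powr (1/2 + \<epsilon>))^2 = real N powr (of_nat 2 * (1/2 + \<epsilon>))"
          by (rule powr_power) (use Nn in simp)
        have b: "real N powr (of_nat 2 * (1/2 + \<epsilon>)) = real N * real N powr (2 * \<epsilon>)"
        proof -
          have "of_nat 2 * (1/2 + \<epsilon>) = 1 + 2 * \<epsilon>" by simp
          hence "real N powr (of_nat 2 * (1/2 + \<epsilon>)) = real N powr 1 * real N powr (2 * \<epsilon>)"
            by (simp only: powr_add)
          thus ?thesis using Nn by simp
        qed
        have "t\<^sup>2 = \<delta>\<^sup>2 * (real N * real N powr (2 * \<epsilon>))"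
          unfolding t_def power_mult_distrib a b ..
        hence tq: "t\<^sup>2 / (real N * \<delta>\<^sup>2) = real N powr (2 * \<epsilon>)" using Nn delta by simp
        have e1: "- 2 * t\<^sup>2 / (real N * \<delta>\<^sup>2) = - 2 * (t\<^sup>2 / (real N * \<delta>\<^sup>2))" by simp
        show ?thesis unfolding e1 tq ..
      qed
      finally show ?thesis by simp
    qed
    have "measure M (\<Union>k<N. Bad k) \<le> (\<Sum>k<N. measure M (Bad k))"
      by (rule finite_measure_subadditive_finite) (use Badm in auto)
    also have "\<dots> \<le> (\<Sum>k<N. 2 * exp (- 2 * real N powr (2 * \<epsilon>)))"
      by (rule sum_mono) (use Badp in auto)
    finally have ub: "measure M (\<Union>k<N. Bad k) \<le> 2 * real N * exp (- 2 * real N powr (2 * \<epsilon>))"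
      by simp
    have Um: "(\<Union>k<N. Bad k) \<in> sets M" using Badm by auto
    have "1 - measure M (\<Union>k<N. Bad k) = measure M (space M - (\<Union>k<N. Bad k))"
      using prob_compl[OF Um] by simp
    also have "\<dots> \<le> measure M G"
      by (rule finite_measure_mono[OF sub Gm])
    finally show ?thesis using ub unfolding G_def B_def by simp
  qed
qed

end
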